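(* Let $X\in\mathbb{R}^{n\times r}$ have linearly independent columns and let $A\in\mathbb{R}^{r\times r}$ be skewsymmetric. Let $Y$ be the random subset of $\{1,\dots,n\}$ with law $$\mathbb{P}(Y=\mathtt{C})=\frac{1}{\det(A+X^\top X)}\det\begin{bmatrix}0_{|\mathtt{C}|}&X_{\mathtt{C}:}\\-(X_{\mathtt{C}:})^\top&A\end{bmatrix}.$$ Then for every $T\subseteq\{1,\dots,n\}$, $$\mathbb{P}(T\subseteq Y)=\det\big(K_{TT}\big),\qquad K=X(A+X^\top X)^{-1}X^\top,$$ where $K_{TT}$ is the principal submatrix of $K$ indexed by $T$.
   Context: $X_{\mathtt{C}:}$ is the submatrix of $X$ with rows indexed by $\mathtt{C}$ in increasing order. $0_m$ is the $m\times m$ zero matrix. For $\mathtt{C}=\emptyset$ the block matrix is $A$. The determinant of the empty matrix is $1$. *)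

theory Defs
  imports "Jordan_Normal_Form.Determinant" "Jordan_Normal_Form.DL_Submatrix"
begin

text \<open>Inverse of a square matrix (meaningful when the matrix is invertible).\<close>
definition inv_mat :: "real mat \<Rightarrow> real mat" where
  "inv_mat M = (SOME B. B \<in> carrier_mat (dim_row M) (dim_row M) \<and>
                        M * B = 1\<^sub>m (dim_row M) \<and> B * M = 1\<^sub>m (dim_row M))"

definition rows_sub :: "real mat \<Rightarrow> nat set \<Rightarrow> real mat" where
  "rows_sub X C = submatrix X C UNIV"

definition dpp_weight :: "real mat \<Rightarrow> real mat \<Rightarrow> nat set \<Rightarrow> real" where
  "dpp_weight X A C = det (four_block_mat (0\<^sub>m (card C) (card C)) (rows_sub X C)
                                         (- transpose_mat (rows_sub X C)) A)"

definition dpp_prob :: "real mat \<Rightarrow> real mat \<Rightarrow> nat set \<Rightarrow> real" where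
  "dpp_prob X A C = dpp_weight X A C / det (A + transpose_mat X * X)"

definition dpp_kernel :: "real mat \<Rightarrow> real mat \<Rightarrow> real mat" where
  "dpp_kernel X A = X * inv_mat (A + transpose_mat X * X) * transpose_mat X"

end

theory Submission
  imports Defs
begin

definition cr :: "real mat \<Rightarrow> nat set \<Rightarrow> real mat" where
  "cr M S = mat (dim_row M) (dim_col M) (\<lambda>(i,j). if j \<in> S then (if i = j then 1 else 0) else M $$ (i,j))"

definition dg :: "nat \<Rightarrow> nat set \<Rightarrow> real mat" where
  "dg m J = mat m m (\<lambda>(i,j). if i = j \<and> i \<in> J then 1 else 0)"

lemma cr_carrier[simp]: "M \<in> carrier_mat m m \<Longrightarrow> cr M S \<in> carrier_mat m m"
  unfolding cr_def by auto

lemma dg_carrier[simp]: "dg m J \<in> carrier_mat m m"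
  unfolding dg_def by auto

lemma det_col_linear:
  fixes M1 M2 M3 :: "real mat"
  assumes M: "M1 \<in> carrier_mat m m" "M2 \<in> carrier_mat m m" "M3 \<in> carrier_mat m m"
    and i: "i < m"
    and other: "\<And>a j. a < m \<Longrightarrow> j < m \<Longrightarrow> j \<noteq> i \<Longrightarrow> M1 $$ (a,j) = M3 $$ (a,j) \<and> M2 $$ (a,j) = M3 $$ (a,j)"
    and coli: "\<And>a. a < m \<Longrightarrow> M3 $$ (a,i) = M1 $$ (a,i) + M2 $$ (a,i)"
  shows "det M3 = det M1 + det M2"
proof -
  have del: "mat_delete M1 a i = mat_delete M3 a i \<and> mat_delete M2 a i = mat_delete M3 a i" if a: "a < m" for a
  proof -
    have "mat_delete Mk a i = mat_delete M3 a i" if "Mk = M1 \<or> Mk = M2" for Mk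
    proof (rule eq_matI)
      fix x y assume "x < dim_row (mat_delete M3 a i)" "y < dim_col (mat_delete M3 a i)"
      then have xy: "x < m - 1" "y < m - 1" using M by auto
      have "(if y < i then y else Suc y) \<noteq> i" by auto
      moreover have "(if y < i then y else Suc y) < m" "(if x < a then x else Suc x) < m" using xy by auto
      ultimately show "mat_delete Mk a i $$ (x, y) = mat_delete M3 a i $$ (x, y)"
        unfolding mat_delete_def using xy M that other by auto
    qed (use M that in auto)
    then show ?thesis by auto
  qed
  have "det M3 = (\<Sum>a<m. M3 $$ (a,i) * cofactor M3 a i)" by (rule laplace_expansion_column[OF M(3) i])
  also have "\<dots> = (\<Sum>a<m. M1 $$ (a,i) * cofactor M1 a i) + (\<Sum>a<m. M2 $$ (a,i) * cofactor M2 a i)"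
    unfolding sum.distrib[symmetric]
    by (rule sum.cong, simp, auto simp: coli cofactor_def del distrib_right)
  also have "\<dots> = det M1 + det M2"
    using laplace_expansion_column[OF M(1) i] laplace_expansion_column[OF M(2) i] by simp
  finally show ?thesis .
qed

lemma cr_cr: "cr (cr M {i}) S = cr M (insert i S)"
  unfolding cr_def by (rule eq_matI) auto

lemma cr_empty: "cr M {} = M"
  unfolding cr_def by (rule eq_matI) auto

lemma det_expand:
  assumes "finite J"
  shows "M \<in> carrier_mat m m \<Longrightarrow> J \<subseteq> {0..<m} \<Longrightarrow> det (M + dg m J) = (\<Sum>S\<in>Pow J. det (cr M S))"
  using assms(1)
proof (induction J arbitrary: M rule: finite_induct)
  case empty
  have "M + dg m {} = M" unfolding dg_def using empty by (intro eq_matI) auto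
  then show ?case by (simp add: cr_empty)
next
  case (insert i J)
  have im: "i < m" using insert by auto
  have "det (M + dg m (insert i J)) = det (M + dg m J) + det (cr M {i} + dg m J)"
    by (rule det_col_linear[OF _ _ _ im], insert insert im, auto simp: dg_def cr_def)
  also have "\<dots> = (\<Sum>S\<in>Pow J. det (cr M S)) + (\<Sum>S\<in>Pow J. det (cr M (insert i S)))"
    using insert by (simp add: cr_cr)
  also have "(\<Sum>S\<in>Pow J. det (cr M (insert i S))) = (\<Sum>S\<in>insert i ` Pow J. det (cr M S))"
  proof -
    have "inj_on (insert i) (Pow J)" using insert(2) unfolding inj_on_def by (metis PowD insert_ident subsetD)
    then show ?thesis by (simp add: sum.reindex)
  qed
  also have "(\<Sum>S\<in>Pow J. det (cr M S)) + \<dots> = (\<Sum>S\<in>Pow (insert i J). det (cr M S))"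
    unfolding Pow_insert
    by (rule sum.union_disjoint[symmetric], use insert in auto)
  finally show ?case .
qed

lemma signof_sq: "(signof p :: real) * signof p = 1"
  by (simp add: sign_def)

lemma det_conj:
  fixes M :: "real mat"
  assumes M: "M \<in> carrier_mat m m" and g: "g permutes {0..<m}"
  shows "det (mat m m (\<lambda>(a,b). M $$ (g a, g b))) = det M"
proof -
  define M1 where "M1 = mat m m (\<lambda>(i,j). M $$ (g i, j))"
  have d1: "det M1 = signof g * det M" unfolding M1_def by (rule det_permute_rows[OF M g])
  have M1c: "M1 \<in> carrier_mat m m" unfolding M1_def by auto
  have "transpose_mat (mat m m (\<lambda>(a,b). M $$ (g a, g b))) = mat m m (\<lambda>(i,j). transpose_mat M1 $$ (g i, j))"
  proof -
    have gin: "\<And>x. x < m \<Longrightarrow> g x < m" using permutes_in_image[OF g] by auto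
    show ?thesis unfolding M1_def by (rule eq_matI) (auto simp: gin)
  qed
  then have "det (mat m m (\<lambda>(a,b). M $$ (g a, g b))) = signof g * det (transpose_mat M1)"
    using det_transpose[of "mat m m (\<lambda>(a,b). M $$ (g a, g b))" m] det_permute_rows[of "transpose_mat M1" m g] M1c g
    by auto
  also have "\<dots> = signof g * (signof g * det M)" using det_transpose[OF M1c] d1 by simp
  also have "\<dots> = det M" by (simp add: mult.assoc[symmetric] signof_sq)
  finally show ?thesis .
qed

lemma det_cr_perm:
  fixes M Q :: "real mat"
  assumes M: "M \<in> carrier_mat m m" and g: "g permutes {0..<m}" and k: "k \<le> m"
    and S: "S = g ` {k..<m}" and Q: "Q \<in> carrier_mat k k"
    and QM: "\<And>a b. a < k \<Longrightarrow> b < k \<Longrightarrow> Q $$ (a,b) = M $$ (g a, g b)"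
  shows "det (cr M S) = det Q"
proof -
  have crc: "cr M S \<in> carrier_mat m m" using M by simp
  have inj: "inj g" using g by (rule permutes_inj)
  have eq: "\<And>a b. (g a = g b) = (a = b)" using inj by (meson injD)
  have gin: "\<And>x. x < m \<Longrightarrow> g x < m" using permutes_in_image[OF g] by auto
  have gS: "\<And>b. (g b \<in> S) = (k \<le> b \<and> b < m)" unfolding S using eq by auto
  define Y where "Y = mat (m-k) k (\<lambda>(a,b). M $$ (g (a+k), g b))"
  define F where "F = four_block_mat Q (0\<^sub>m k (m-k)) Y (1\<^sub>m (m-k))"
  have Fd: "dim_row F = m" "dim_col F = m" unfolding F_def using Q k by (auto simp: Y_def)
  have "mat m m (\<lambda>(a,b). cr M S $$ (g a, g b)) = F"
  proof (rule eq_matI)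
    fix a b assume ab: "a < dim_row F" "b < dim_col F"
    then have ab': "a < m" "b < m" using Fd by auto
    have l: "mat m m (\<lambda>(a,b). cr M S $$ (g a, g b)) $$ (a, b) = 
       (if k \<le> b then (if a = b then 1 else 0) else M $$ (g a, g b))"
      using ab' M gin[OF ab'(1)] gin[OF ab'(2)] gS[of b] eq[of a b] by (simp add: cr_def)
    have r: "F $$ (a,b) = (if a < k then if b < k then Q $$ (a,b) else 0
       else if b < k then M $$ (g a, g b) else (if a = b then 1 else 0))"
      unfolding F_def using ab' Q k by (auto simp: Y_def)
    show "mat m m (\<lambda>(a,b). cr M S $$ (g a, g b)) $$ (a, b) = F $$ (a, b)"
      unfolding l r using QM by auto
  qed (use Fd in auto)
  then have "det (cr M S) = det F"
    using det_conj[OF crc g] by simp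
  also have "\<dots> = det Q"
    unfolding F_def
    by (subst det_four_block_mat_upper_right_zero[OF Q refl]) (auto simp: Y_def)
  finally show ?thesis .
qed

lemma self_sprod_zero:
  fixes w :: "real vec"
  assumes "w \<bullet> w = 0" and w: "w \<in> carrier_vec n"
  shows "w = 0\<^sub>v n"
proof -
  have "(\<Sum>i\<in>{0..<dim_vec w}. w $ i * w $ i) = 0" using assms(1) unfolding scalar_prod_def by simp
  then have "\<forall>i\<in>{0..<dim_vec w}. w $ i * w $ i = 0"
    by (subst sum_nonneg_eq_0_iff[symmetric]) auto
  then show ?thesis using w by (intro eq_vecI) auto
qed

lemma G_inv_ex:
  fixes X A :: "real mat"
  assumes X: "X \<in> carrier_mat n r"
    and A: "A \<in> carrier_mat r r"
    and skew: "transpose_mat A = - A"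
    and indep: "\<forall>v \<in> carrier_vec r. X *\<^sub>v v = 0\<^sub>v n \<longrightarrow> v = 0\<^sub>v r"
  shows "\<exists>B. B \<in> carrier_mat r r \<and> (A + transpose_mat X * X) * B = 1\<^sub>m r \<and> B * (A + transpose_mat X * X) = 1\<^sub>m r"
proof -
  define G where "G = A + transpose_mat X * X"
  have Gc: "G \<in> carrier_mat r r" unfolding G_def using X A by auto
  have "det G \<noteq> 0"
  proof
    assume "det G = 0"
    then obtain v where v: "v \<in> carrier_vec r" "v \<noteq> 0\<^sub>v r" "G *\<^sub>v v = 0\<^sub>v r"
      using det_0_iff_vec_prod_zero_field[OF Gc] by auto
    have XtXc: "transpose_mat X * X \<in> carrier_mat r r" using X by auto
    have "0 = v \<bullet> (G *\<^sub>v v)" using v by simp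
    also have "\<dots> = v \<bullet> (A *\<^sub>v v) + v \<bullet> ((transpose_mat X * X) *\<^sub>v v)"
      unfolding G_def using add_mult_distrib_mat_vec[OF A XtXc v(1)] v A XtXc
      by (simp add: scalar_prod_add_distrib[of v r])
    also have "v \<bullet> (A *\<^sub>v v) = 0"
    proof -
      have "(transpose_mat A *\<^sub>v v) \<bullet> v = v \<bullet> (A *\<^sub>v v)" by (rule transpose_vec_mult_scalar[OF A v(1) v(1)])
      also have "(transpose_mat A *\<^sub>v v) \<bullet> v = - ((A *\<^sub>v v) \<bullet> v)" unfolding skew using A v by simp
      also have "(A *\<^sub>v v) \<bullet> v = v \<bullet> (A *\<^sub>v v)" using A v by (intro comm_scalar_prod[of _ r]) auto
      finally show ?thesis by simp
    qed
    also have "v \<bullet> ((transpose_mat X * X) *\<^sub>v v) = (X *\<^sub>v v) \<bullet> (X *\<^sub>v v)"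
    proof -
      have "(transpose_mat X * X) *\<^sub>v v = transpose_mat X *\<^sub>v (X *\<^sub>v v)" using X v by (simp add: assoc_mult_mat_vec)
      moreover have "(transpose_mat X *\<^sub>v (X *\<^sub>v v)) \<bullet> v = (X *\<^sub>v v) \<bullet> (X *\<^sub>v v)"
        by (rule transpose_vec_mult_scalar[OF X v(1)]) (use X v in auto)
      moreover have "v \<bullet> (transpose_mat X *\<^sub>v (X *\<^sub>v v)) = (transpose_mat X *\<^sub>v (X *\<^sub>v v)) \<bullet> v"
        using X v by (intro comm_scalar_prod[of _ r]) auto
      ultimately show ?thesis by simp
    qed
    finally have "(X *\<^sub>v v) \<bullet> (X *\<^sub>v v) = 0" by simp
    then have "X *\<^sub>v v = 0\<^sub>v n" using X v(1) by (intro self_sprod_zero) auto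
    then show False using indep v by auto
  qed
  from det_non_zero_imp_unit[OF Gc this, of "()"]
  obtain B where "B \<in> carrier_mat r r" "B * G = 1\<^sub>m r" "G * B = 1\<^sub>m r"
    unfolding Units_def ring_mat_simps by auto
  then show ?thesis unfolding G_def by auto
qed

lemma perm3:
  assumes C: "C \<subseteq> {0..<n}"
    and g: "g = (\<lambda>a. if a < card C then pick C a else if a < card C + r then n + (a - card C)
                  else if a < n + r then pick ({0..<n} - C) (a - card C - r) else a)"
  shows "g permutes {0..<n+r}" "g ` {card C + r..<n+r} = {0..<n} - C"
proof -
  define c where "c = card C"
  define S where "S = {0..<n} - C"
  have fC: "finite C" using C finite_subset by blast
  have cS: "card S = n - c" unfolding S_def c_def using C fC by (simp add: card_Diff_subset)
  have cn: "c \<le> n" unfolding c_def using card_mono[OF _ C] by simp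
  have pC: "pick C a \<in> C" "pick C a < n" if "a < c" for a
  proof -
    have "pick C a \<in> C" using pick_in_set[of a C] that unfolding c_def by simp
    then show "pick C a \<in> C" "pick C a < n" using C by auto
  qed
  have pS: "pick S a \<in> S" "pick S a < n" "pick S a \<notin> C" if "a < n - c" for a
  proof -
    have "pick S a \<in> S" using pick_in_set[of a S] that cS by simp
    then show "pick S a \<in> S" "pick S a < n" "pick S a \<notin> C" unfolding S_def by auto
  qed
  have monoC: "pick C a < pick C b" if "a < b" "b < c" for a b
    using pick_mono[of b C a] that unfolding c_def by auto
  have monoS: "pick S a < pick S b" if "a < b" "b < n - c" for a b
    using pick_mono[of b S a] that cS by auto
  have g1: "g a = pick C a" if "a < c" for a using that unfolding g c_def by simp
  have g2: "g a = n + (a - c)" if "c \<le> a" "a < c + r" for a using that unfolding g c_def by simp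
  have g3: "g a = pick S (a - c - r)" if "c + r \<le> a" "a < n + r" for a using that unfolding g c_def S_def by simp
  have g4: "g a = a" if "\<not> a < n + r" for a using that cn unfolding g c_def by simp
  have inj: "inj_on g {0..<n+r}"
  proof (rule linorder_inj_onI')
    fix a b assume ab: "a \<in> {0..<n+r}" "b \<in> {0..<n+r}" "a < b"
    show "g a \<noteq> g b"
    proof (cases "b < c")
      case True then show ?thesis using ab monoC[of a b] g1[of a] g1[of b] by simp
    next
      case b1: False
      show ?thesis
      proof (cases "b < c + r")
        case True
        show ?thesis
        proof (cases "a < c")
          case True
          then show ?thesis using ab b1 \<open>b < c + r\<close> pC[of a] g1[of a] g2[of b] by simp
        next
          case False
          then show ?thesis using ab b1 \<open>b < c + r\<close> g2[of a] g2[of b] by simp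
        qed
      next
        case False
        have bb: "b - c - r < n - c" using ab False by auto
        have gb: "g b \<in> S" "g b \<notin> C" "g b < n" using g3[of b] False ab pS[OF bb] by auto
        show ?thesis
        proof (cases "a < c")
          case True
          then show ?thesis using gb pC[of a] g1[of a] by auto
        next
          case a1: False
          show ?thesis
          proof (cases "a < c + r")
            case True
            then show ?thesis using gb g2[of a] a1 by auto
          next
            case False
            have lt: "a - c - r < b - c - r" using False ab by auto
            have "g a = pick S (a - c - r)" "g b = pick S (b - c - r)"
              using g3[of a] g3[of b] False ab \<open>\<not> b < c + r\<close> by auto
            then show ?thesis using monoS[OF lt bb] by simp
          qed
        qed
      qed
    qed
  qed
  have gin: "g a < n + r" if "a < n + r" for a
  proof (cases "a < c")
    case True then show ?thesis using pC[of a] g1[of a] by auto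
  next
    case a1: False
    show ?thesis
    proof (cases "a < c + r")
      case True then show ?thesis using g2[of a] a1 that by auto
    next
      case False
      then have "a - c - r < n - c" using that by auto
      then show ?thesis using pS[of "a - c - r"] g3[of a] False that by auto
    qed
  qed
  have sub: "g ` {0..<n+r} \<subseteq> {0..<n+r}" using gin by auto
  have bij: "bij_betw g {0..<n+r} {0..<n+r}"
    unfolding bij_betw_def using inj endo_inj_surj[OF _ sub inj] by auto
  show "g permutes {0..<n+r}"
    by (rule bij_imp_permutes[OF bij]) (auto simp: g4)
  have sub2: "g ` {c + r..<n+r} \<subseteq> S"
  proof
    fix y assume "y \<in> g ` {c + r..<n+r}"
    then obtain a where a: "c + r \<le> a" "a < n + r" "y = g a" by auto
    then have "a - c - r < n - c" by auto
    then show "y \<in> S" using pS[of "a - c - r"] g3[of a] a by auto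
  qed
  have "card (g ` {c + r..<n+r}) = card S"
  proof -
    have "inj_on g {c + r..<n+r}" using inj by (rule inj_on_subset) auto
    then have "card (g ` {c + r..<n+r}) = n + r - (c + r)" by (simp add: card_image)
    then show ?thesis using cS by simp
  qed
  then have "g ` {c + r..<n+r} = S"
    by (intro card_subset_eq[OF _ sub2]) (auto simp: S_def)
  then show "g ` {card C + r..<n+r} = {0..<n} - C" unfolding c_def S_def .
qed

lemma rows_sub_props:
  assumes X: "X \<in> carrier_mat n r" and C: "C \<subseteq> {0..<n}"
  shows "rows_sub X C \<in> carrier_mat (card C) r"
    "\<And>a j. a < card C \<Longrightarrow> j < r \<Longrightarrow> rows_sub X C $$ (a,j) = X $$ (pick C a, j)"
proof -
  have e1: "{i. i < dim_row X \<and> i \<in> C} = C" using X C by auto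
  have e2: "card {j. j < dim_col X \<and> j \<in> UNIV} = r" using X by auto
  have d1: "dim_row (rows_sub X C) = card C" unfolding rows_sub_def dim_submatrix e1 ..
  have d2: "dim_col (rows_sub X C) = r" unfolding rows_sub_def dim_submatrix e2 ..
  show "rows_sub X C \<in> carrier_mat (card C) r" using d1 d2 by (rule carrier_matI)
  fix a j assume a: "a < card C" "j < r"
  have a1: "a < card {i. i < dim_row X \<and> i \<in> C}" unfolding e1 by (rule a(1))
  have a2: "j < card {j. j < dim_col X \<and> j \<in> UNIV}" unfolding e2 by (rule a(2))
  show "rows_sub X C $$ (a,j) = X $$ (pick C a, j)"
    unfolding rows_sub_def submatrix_index[OF a1 a2] pick_UNIV ..
qed

lemma weight_eq:
  fixes X A :: "real mat"
  assumes X: "X \<in> carrier_mat n r" and A: "A \<in> carrier_mat r r" and C: "C \<subseteq> {0..<n}"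
  shows "dpp_weight X A C = det (cr (four_block_mat (0\<^sub>m n n) X (- transpose_mat X) A) ({0..<n} - C))"
proof -
  define B where "B = four_block_mat (0\<^sub>m n n) X (- transpose_mat X) A"
  define c where "c = card C"
  define XC where "XC = rows_sub X C"
  define Q where "Q = four_block_mat (0\<^sub>m c c) XC (- transpose_mat XC) A"
  define g where "g = (\<lambda>a. if a < card C then pick C a else if a < card C + r then n + (a - card C)
                  else if a < n + r then pick ({0..<n} - C) (a - card C - r) else a)"
  note P = perm3[OF C g_def]
  have XC: "XC \<in> carrier_mat c r" unfolding XC_def c_def using rows_sub_props(1)[OF X C] .
  have XCi: "\<And>a j. a < c \<Longrightarrow> j < r \<Longrightarrow> XC $$ (a,j) = X $$ (pick C a, j)"
    unfolding XC_def c_def using rows_sub_props(2)[OF X C] .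
  have Bc: "B \<in> carrier_mat (n+r) (n+r)" unfolding B_def using X A by auto
  have Qc: "Q \<in> carrier_mat (c+r) (c+r)" unfolding Q_def using XC A by auto
  have cn: "c \<le> n" unfolding c_def using card_mono[OF _ C] by simp
  have pC: "pick C a < n" if "a < c" for a
  proof -
    have "pick C a \<in> C" using pick_in_set[of a C] that unfolding c_def by simp
    then show ?thesis using C by auto
  qed
  have g1: "g a = pick C a" if "a < c" for a using that unfolding g_def c_def by simp
  have g2: "g a = n + (a - c)" if "c \<le> a" "a < c + r" for a using that unfolding g_def c_def by simp
  have Bi: "B $$ (i,j) = (if i < n then if j < n then 0 else X $$ (i, j - n)
       else if j < n then - X $$ (j, i - n) else A $$ (i - n, j - n))" if "i < n + r" "j < n + r" for i j
    unfolding B_def using that X A by auto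
  have Qi: "Q $$ (a,b) = (if a < c then if b < c then 0 else XC $$ (a, b - c)
       else if b < c then - XC $$ (b, a - c) else A $$ (a - c, b - c))" if "a < c + r" "b < c + r" for a b
    unfolding Q_def using that XC A by auto
  have QM: "Q $$ (a,b) = B $$ (g a, g b)" if ab: "a < c + r" "b < c + r" for a b
  proof -
    have ga: "g a < n + r" "(g a < n) = (a < c)" "a < c \<Longrightarrow> g a = pick C a" "\<not> a < c \<Longrightarrow> g a - n = a - c"
      using g1[of a] g2[of a] pC[of a] ab by (cases "a < c"; simp)+
    have gb: "g b < n + r" "(g b < n) = (b < c)" "b < c \<Longrightarrow> g b = pick C b" "\<not> b < c \<Longrightarrow> g b - n = b - c"
      using g1[of b] g2[of b] pC[of b] ab by (cases "b < c"; simp)+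
    show ?thesis
      unfolding Qi[OF ab] Bi[OF ga(1) gb(1)] ga(2) gb(2)
    proof (cases "a < c"; cases "b < c")
      assume "a < c" "\<not> b < c" then show "(if a < c then if b < c then 0 else XC $$ (a, b - c) else if b < c then - XC $$ (b, a - c) else A $$ (a - c, b - c)) =
    (if a < c then if b < c then 0 else X $$ (g a, g b - n) else if b < c then - X $$ (g b, g a - n) else A $$ (g a - n, g b - n))"
        using ga(3) gb(4) XCi[of a "b - c"] ab by simp
    next
      assume "\<not> a < c" "b < c" then show "(if a < c then if b < c then 0 else XC $$ (a, b - c) else if b < c then - XC $$ (b, a - c) else A $$ (a - c, b - c)) =
    (if a < c then if b < c then 0 else X $$ (g a, g b - n) else if b < c then - X $$ (g b, g a - n) else A $$ (g a - n, g b - n))"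
        using ga(4) gb(3) XCi[of b "a - c"] ab by simp
    next
      assume "\<not> a < c" "\<not> b < c" then show "(if a < c then if b < c then 0 else XC $$ (a, b - c) else if b < c then - XC $$ (b, a - c) else A $$ (a - c, b - c)) =
    (if a < c then if b < c then 0 else X $$ (g a, g b - n) else if b < c then - X $$ (g b, g a - n) else A $$ (g a - n, g b - n))"
        using ga(4) gb(4) by simp
    qed simp
  qed
  have "dpp_weight X A C = det Q"
    unfolding dpp_weight_def Q_def XC_def c_def ..
  also have "\<dots> = det (cr B ({0..<n} - C))"
  proof -
    have k: "c + r \<le> n + r" using cn by simp
    have S: "{0..<n} - C = g ` {c + r..<n + r}" using P(2) unfolding c_def by simp
    show ?thesis by (rule det_cr_perm[OF Bc P(1) k S Qc QM, symmetric])
  qed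
  finally show ?thesis unfolding B_def .
qed

lemma mult_dg_index:
  fixes M :: "real mat"
  assumes M: "M \<in> carrier_mat m n" and i: "i < m" and j: "j < n"
  shows "(M * dg n T) $$ (i,j) = (if j \<in> T then M $$ (i,j) else 0)"
proof -
  have "(M * dg n T) $$ (i,j) = (\<Sum>k\<in>{0..<n}. M $$ (i,k) * (if k = j \<and> k \<in> T then 1 else 0))"
    using M i j by (simp add: dg_def scalar_prod_def)
  also have "\<dots> = (\<Sum>k\<in>{0..<n}. if k = j then (if j \<in> T then M $$ (i,j) else 0) else 0)"
    by (rule sum.cong) auto
  also have "\<dots> = (if j \<in> T then M $$ (i,j) else 0)" using j by (simp add: sum.delta)
  finally show ?thesis .
qed

lemma add_neg_cancel_mat: "(P :: real mat) \<in> carrier_mat a b \<Longrightarrow> Q \<in> carrier_mat a b \<Longrightarrow> P + Q + - Q = P"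
  by (rule eq_matI) auto

lemma kernel_det:
  fixes X A Gi :: "real mat"
  assumes X: "X \<in> carrier_mat n r" and A: "A \<in> carrier_mat r r"
    and Gi: "Gi \<in> carrier_mat r r" and GGi: "(A + transpose_mat X * X) * Gi = 1\<^sub>m r"
    and T: "T \<subseteq> {0..<n}"
  shows "det (four_block_mat (dg n ({0..<n} - T)) X (- transpose_mat X) A)
     = det (A + transpose_mat X * X) * det (cr (X * Gi * transpose_mat X) ({0..<n} - T))"
proof -
  define G where "G = A + transpose_mat X * X"
  define Xt where "Xt = transpose_mat X"
  define E where "E = dg n T"
  define W where "W = Gi * (Xt * E)"
  define Kc where "Kc = (1\<^sub>m n - E) + X * W"
  define L where "L = four_block_mat (1\<^sub>m n) (0\<^sub>m n r) (- Xt) (1\<^sub>m r)"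
  define U where "U = four_block_mat (1\<^sub>m n) X (0\<^sub>m r n) G"
  define R where "R = four_block_mat Kc (0\<^sub>m n r) (- W) (1\<^sub>m r)"
  have Xt: "Xt \<in> carrier_mat r n" unfolding Xt_def using X by auto
  have G: "G \<in> carrier_mat r r" unfolding G_def using X A by auto
  have E: "E \<in> carrier_mat n n" unfolding E_def by simp
  have XtE: "Xt * E \<in> carrier_mat r n" using Xt E by auto
  have W: "W \<in> carrier_mat r n" unfolding W_def using Gi XtE by auto
  have XW: "X * W \<in> carrier_mat n n" using X W by auto
  have IE: "1\<^sub>m n - E \<in> carrier_mat n n" using E by auto
  have Kc: "Kc \<in> carrier_mat n n" unfolding Kc_def using IE XW by auto
  have L: "L \<in> carrier_mat (n+r) (n+r)" unfolding L_def by auto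
  have U: "U \<in> carrier_mat (n+r) (n+r)" unfolding U_def using G by auto
  have R: "R \<in> carrier_mat (n+r) (n+r)" unfolding R_def using Kc by auto
  have UR: "U * R = four_block_mat (1\<^sub>m n - E) X (- (Xt * E)) G"
  proof -
    have "U * R = four_block_mat (1\<^sub>m n * Kc + X * - W) (1\<^sub>m n * 0\<^sub>m n r + X * 1\<^sub>m r)
        (0\<^sub>m r n * Kc + G * - W) (0\<^sub>m r n * 0\<^sub>m n r + G * 1\<^sub>m r)"
      unfolding U_def R_def by (rule mult_four_block_mat) (use X G Kc W in auto)
    also have "1\<^sub>m n * Kc + X * - W = 1\<^sub>m n - E"
      using Kc X W uminus_mult_right_mat[of X W] unfolding Kc_def by (simp add: add_neg_cancel_mat[OF IE XW])
    also have "1\<^sub>m n * 0\<^sub>m n r + X * 1\<^sub>m r = X" using X by simp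
    also have "0\<^sub>m r n * Kc + G * - W = - (Xt * E)"
    proof -
      have "G * W = (G * Gi) * (Xt * E)" unfolding W_def using G Gi XtE by (simp add: assoc_mult_mat)
      also have "\<dots> = Xt * E" unfolding G_def GGi using XtE by (rule left_mult_one_mat)
      finally have "G * W = Xt * E" .
      then show ?thesis using G W Kc XtE uminus_mult_right_mat[of G W] by simp
    qed
    also have "0\<^sub>m r n * 0\<^sub>m n r + G * 1\<^sub>m r = G" using G by simp
    finally show ?thesis .
  qed
  have M: "four_block_mat (dg n ({0..<n} - T)) X (- Xt) A = L * (U * R)"
  proof -
    have "L * (U * R) = four_block_mat (1\<^sub>m n * (1\<^sub>m n - E) + 0\<^sub>m n r * - (Xt * E)) (1\<^sub>m n * X + 0\<^sub>m n r * G)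
        (- Xt * (1\<^sub>m n - E) + 1\<^sub>m r * - (Xt * E)) (- Xt * X + 1\<^sub>m r * G)"
      unfolding L_def UR by (rule mult_four_block_mat) (use X G Xt E XtE in auto)
    also have "1\<^sub>m n * (1\<^sub>m n - E) + 0\<^sub>m n r * - (Xt * E) = dg n ({0..<n} - T)"
      using IE XtE by (simp add: E_def, intro eq_matI, auto simp: dg_def)
    also have "1\<^sub>m n * X + 0\<^sub>m n r * G = X" using X G by simp
    also have "- Xt * (1\<^sub>m n - E) + 1\<^sub>m r * - (Xt * E) = - Xt"
    proof -
      have "Xt * (1\<^sub>m n - E) = Xt - Xt * E" using mult_minus_distrib_mat[OF Xt one_carrier_mat E] Xt by simp
      moreover have "- Xt * (1\<^sub>m n - E) = - (Xt * (1\<^sub>m n - E))" by (rule uminus_mult_left_mat) (use Xt E in auto)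
      ultimately have "- Xt * (1\<^sub>m n - E) = - (Xt - Xt * E)" by simp
      then show ?thesis using Xt XtE by (simp, intro eq_matI, auto)
    qed
    also have "- Xt * X + 1\<^sub>m r * G = A"
      using Xt X G A uminus_mult_left_mat[of Xt X] unfolding G_def Xt_def by (simp, intro eq_matI, auto)
    finally show ?thesis by simp
  qed
  have dL: "det L = 1" unfolding L_def
    by (subst det_four_block_mat_upper_right_zero[of _ n _ r]) (use Xt in auto)
  have dU: "det U = det G" unfolding U_def
    by (subst det_four_block_mat_lower_left_zero[of _ n _ r]) (use X G in auto)
  have dR: "det R = det Kc" unfolding R_def
    by (subst det_four_block_mat_upper_right_zero[of _ n _ r]) (use Kc W in auto)
  have "det (four_block_mat (dg n ({0..<n} - T)) X (- Xt) A) = det G * det Kc"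
    unfolding M using det_mult[OF L, of "U * R"] det_mult[OF U R] U R dL dU dR by simp
  also have "Kc = cr (X * Gi * transpose_mat X) ({0..<n} - T)"
  proof -
    define K where "K = X * Gi * Xt"
    have K: "K \<in> carrier_mat n n" unfolding K_def using X Gi Xt by auto
    have "X * W = K * E"
    proof -
      have "Gi * (Xt * E) = Gi * Xt * E" using assoc_mult_mat[OF Gi Xt E] by simp
      moreover have "X * (Gi * Xt * E) = X * (Gi * Xt) * E"
        using assoc_mult_mat[of X n r "Gi * Xt" n E n] X Gi Xt E by simp
      moreover have "X * (Gi * Xt) = X * Gi * Xt" using assoc_mult_mat[OF X Gi Xt] by simp
      ultimately show ?thesis unfolding K_def W_def by simp
    qed
    then have "Kc = (1\<^sub>m n - E) + K * E" unfolding Kc_def by simp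
    also have "\<dots> = cr K ({0..<n} - T)"
    proof (rule eq_matI)
      fix i j assume ij: "i < dim_row (cr K ({0..<n} - T))" "j < dim_col (cr K ({0..<n} - T))"
      then have ij': "i < n" "j < n" using K by (auto simp: cr_def)
      show "(1\<^sub>m n - E + K * E) $$ (i, j) = cr K ({0..<n} - T) $$ (i, j)"
        using ij' K E mult_dg_index[OF K ij', of T] unfolding E_def by (auto simp: cr_def dg_def)
    qed (use K E in \<open>auto simp: cr_def\<close>)
    finally show ?thesis unfolding K_def Xt_def .
  qed
  finally show ?thesis unfolding Xt_def G_def .
qed

lemma cr_submatrix:
  fixes K :: "real mat"
  assumes K: "K \<in> carrier_mat n n" and T: "T \<subseteq> {0..<n}"
  shows "det (cr K ({0..<n} - T)) = det (submatrix K T T)"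
proof -
  define g where "g = (\<lambda>a. if a < card T then pick T a else if a < card T + 0 then n + (a - card T)
                  else if a < n + 0 then pick ({0..<n} - T) (a - card T - 0) else a)"
  note P = perm3[OF T g_def]
  have P1: "g permutes {0..<n}" using P(1) by simp
  have P2: "{0..<n} - T = g ` {card T..<n}" using P(2) by simp
  have cn: "card T \<le> n" using card_mono[OF _ T] by simp
  have e1: "{i. i < dim_row K \<and> i \<in> T} = T" using K T by auto
  have e2: "{i. i < dim_col K \<and> i \<in> T} = T" using K T by auto
  have Qc: "submatrix K T T \<in> carrier_mat (card T) (card T)"
    by (rule carrier_matI) (simp_all only: dim_submatrix e1 e2)
  have QM: "submatrix K T T $$ (a,b) = K $$ (g a, g b)" if "a < card T" "b < card T" for a b
  proof -
    have a1: "a < card {i. i < dim_row K \<and> i \<in> T}" unfolding e1 by (rule that(1))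
    have b1: "b < card {i. i < dim_col K \<and> i \<in> T}" unfolding e2 by (rule that(2))
    show ?thesis unfolding submatrix_index[OF a1 b1] using that unfolding g_def by simp
  qed
  show ?thesis by (rule det_cr_perm[OF K P1 cn P2 Qc QM])
qed

theorem mainTheorem7:
  fixes X A :: "real mat" and n r :: nat and T :: "nat set"
  assumes X: "X \<in> carrier_mat n r"
    and A: "A \<in> carrier_mat r r"
    and skew: "transpose_mat A = - A"
    and indep: "\<forall>v \<in> carrier_vec r. X *\<^sub>v v = 0\<^sub>v n \<longrightarrow> v = 0\<^sub>v r"
    and T: "T \<subseteq> {0..<n}"
  shows "(\<Sum>C \<in> {C. C \<subseteq> {0..<n} \<and> T \<subseteq> C}. dpp_prob X A C)
           = det (submatrix (dpp_kernel X A) T T)"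
proof -
  define G where "G = A + transpose_mat X * X"
  define Gi where "Gi = inv_mat G"
  define B where "B = four_block_mat (0\<^sub>m n n) X (- transpose_mat X) A"
  have Gc: "G \<in> carrier_mat r r" unfolding G_def using X A by auto
  have ex: "\<exists>M. M \<in> carrier_mat (dim_row G) (dim_row G) \<and> G * M = 1\<^sub>m (dim_row G) \<and> M * G = 1\<^sub>m (dim_row G)"
  proof -
    have d: "dim_row G = r" using Gc by simp
    show ?thesis unfolding d using G_inv_ex[OF X A skew indep] unfolding G_def by blast
  qed
  have Gi: "Gi \<in> carrier_mat r r" "G * Gi = 1\<^sub>m r"
    using someI_ex[OF ex] Gc unfolding Gi_def inv_mat_def by auto
  have dG: "det G \<noteq> 0"
  proof
    assume "det G = 0"
    then have "det (G * Gi) = 0" using det_mult[OF Gc Gi(1)] by simp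
    then show False using Gi(2) by simp
  qed
  have Bc: "B \<in> carrier_mat (n+r) (n+r)" unfolding B_def using X A by auto
  have "(\<Sum>C \<in> {C. C \<subseteq> {0..<n} \<and> T \<subseteq> C}. dpp_weight X A C)
      = (\<Sum>C \<in> {C. C \<subseteq> {0..<n} \<and> T \<subseteq> C}. det (cr B ({0..<n} - C)))"
    by (rule sum.cong) (auto simp: weight_eq[OF X A] B_def)
  also have "\<dots> = (\<Sum>S \<in> Pow ({0..<n} - T). det (cr B S))"
    by (rule sum.reindex_bij_witness[where i = "\<lambda>S. {0..<n} - S" and j = "\<lambda>C. {0..<n} - C"]) (use T in auto)
  also have "\<dots> = det (B + dg (n+r) ({0..<n} - T))"
    by (rule det_expand[symmetric, OF _ Bc]) auto
  also have "B + dg (n+r) ({0..<n} - T) = four_block_mat (dg n ({0..<n} - T)) X (- transpose_mat X) A"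
    unfolding B_def using X A by (intro eq_matI) (auto simp: dg_def)
  also have "det \<dots> = det G * det (cr (X * Gi * transpose_mat X) ({0..<n} - T))"
    unfolding G_def by (rule kernel_det[OF X A Gi(1) Gi(2)[unfolded G_def] T])
  also have "det (cr (X * Gi * transpose_mat X) ({0..<n} - T)) = det (submatrix (dpp_kernel X A) T T)"
    unfolding dpp_kernel_def Gi_def G_def
    by (rule cr_submatrix[OF _ T]) (use X Gc[unfolded G_def] Gi(1)[unfolded Gi_def G_def] in auto)
  finally have "(\<Sum>C \<in> {C. C \<subseteq> {0..<n} \<and> T \<subseteq> C}. dpp_weight X A C) = det G * det (submatrix (dpp_kernel X A) T T)" .
  then show ?thesis
    unfolding dpp_prob_def sum_divide_distrib[symmetric] G_def[symmetric] using dG by simp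
qed

end
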